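(* Consider the finite configuration of height $3$ and type $(1,2,2,1)$ given by $$p_{0,1}=0,\ p_{1,1}=-\tfrac{\sqrt2}{2}+\mathrm{i},\ p_{1,2}=\tfrac{\sqrt2}{2}+\mathrm{i},\ p_{2,1}=-\tfrac{\sqrt2}{2}+2\mathrm{i},\ p_{2,2}=\tfrac{\sqrt2}{2}+2\mathrm{i},\ p_{3,1}=3\mathrm{i}.$$ This configuration is balanced, non-degenerate and has residual force $\frac{2}{3\mathrm{i}}$.
   Context: For a finite configuration $(p_{k,i})_{0\le k\le h,1\le i\le n_k}$ of type $(n_0,\ldots,n_h)$ with $n_0=n_h=1$: set $c_k=1/n_k$, $n_{-1}=n_{h+1}=0$, $u_{k,i}=p_{k,i}-p_{k,1}$, $\ell_k=p_{k,1}-p_{k-1,1}$; forces $F_{k,i}=2\sum_{j\neq i}\frac{c_k^2}{p_{k,i}-p_{k,j}}-\sum_{j=1}^{n_{k+1}}\frac{c_kc_{k+1}}{p_{k,i}-p_{k+1,j}}-\sum_{j=1}^{n_{k-1}}\frac{c_kc_{k-1}}{p_{k,i}-p_{k-1,j}}$ and $G_k=\sum_{i=1}^{n_k}\sum_{j=1}^{n_{k-1}}\frac{c_kc_{k-1}}{p_{k,i}-p_{k-1,j}}$ ($1\le k\le h$). Balanced means $F_{k,i}=0$ for $1\le k\le h-1$; the residual force is $F_{0,1}$; non-degenerate means the differential of the map $(\ell_1,u_{1,2},\ldots,u_{1,n_1},\ell_2,u_{2,2},\ldots,u_{2,n_2},\ell_3,\ldots,\ell_h)\mapsto(G_1,F_{1,2},\ldots,F_{1,n_1},G_2,F_{2,2},\ldots,F_{2,n_2},G_3,\ldots,G_h)$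 is an isomorphism. *)

theory Defs
  imports Complex_Main
begin

text \<open>A finite configuration of height h and type (n 0, ..., n h) is given by
  h :: nat, n :: nat \<Rightarrow> nat and points p k i :: complex for 0 \<le> k \<le> h, 1 \<le> i \<le> n k
  (values of p and n outside this range are irrelevant).  Conventions n(-1) = n(h+1) = 0
  are implemented by guarding the corresponding sums.\<close>

definition cfg_c :: "(nat \<Rightarrow> nat) \<Rightarrow> nat \<Rightarrow> complex" where
  "cfg_c n k = 1 / of_nat (n k)"

definition cfg_F :: "nat \<Rightarrow> (nat \<Rightarrow> nat) \<Rightarrow> (nat \<Rightarrow> nat \<Rightarrow> complex) \<Rightarrow> nat \<Rightarrow> nat \<Rightarrow> complex" where
  "cfg_F h n p k i =
     2 * (\<Sum>j\<in>{1..n k} - {i}. (cfg_c n k)^2 / (p k i - p k j))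
     - (if k + 1 \<le> h then (\<Sum>j\<in>{1..n (k+1)}. cfg_c n k * cfg_c n (k+1) / (p k i - p (k+1) j)) else 0)
     - (if 1 \<le> k then (\<Sum>j\<in>{1..n (k-1)}. cfg_c n k * cfg_c n (k-1) / (p k i - p (k-1) j)) else 0)"

definition cfg_G :: "(nat \<Rightarrow> nat) \<Rightarrow> (nat \<Rightarrow> nat \<Rightarrow> complex) \<Rightarrow> nat \<Rightarrow> complex" where
  "cfg_G n p k =
     (\<Sum>i\<in>{1..n k}. \<Sum>j\<in>{1..n (k-1)}. cfg_c n k * cfg_c n (k-1) / (p k i - p (k-1) j))"

definition balanced :: "nat \<Rightarrow> (nat \<Rightarrow> nat) \<Rightarrow> (nat \<Rightarrow> nat \<Rightarrow> complex) \<Rightarrow> bool" where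
  "balanced h n p \<longleftrightarrow> (\<forall>k\<in>{1..h-1}. \<forall>i\<in>{1..n k}. cfg_F h n p k i = 0)"

definition residual_force :: "nat \<Rightarrow> (nat \<Rightarrow> nat) \<Rightarrow> (nat \<Rightarrow> nat \<Rightarrow> complex) \<Rightarrow> complex" where
  "residual_force h n p = cfg_F h n p 0 1"

text \<open>The index set V h n = {(k,i). 1 \<le> k \<le> h, 1 \<le> i \<le> n k}: the coordinate
  (k,1) stands for \<ell>_k = p_{k,1} - p_{k-1,1} and (k,i), i \<ge> 2, for u_{k,i} = p_{k,i} - p_{k,1}.
  (Since n h = 1 there are no u_{h,i}.)  On the output side, (k,1) stands for G_k and (k,i),
  i \<ge> 2, for F_{k,i}.\<close>

definition cfg_V :: "nat \<Rightarrow> (nat \<Rightarrow> nat) \<Rightarrow> (nat \<times> nat) set" where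
  "cfg_V h n = {(k,i). 1 \<le> k \<and> k \<le> h \<and> 1 \<le> i \<and> i \<le> n k}"

definition cfg_coords :: "(nat \<Rightarrow> nat \<Rightarrow> complex) \<Rightarrow> nat \<times> nat \<Rightarrow> complex" where
  "cfg_coords p = (\<lambda>(k,i). if i = 1 then p k 1 - p (k-1) 1 else p k i - p k 1)"

definition cfg_points :: "complex \<Rightarrow> (nat \<times> nat \<Rightarrow> complex) \<Rightarrow> nat \<Rightarrow> nat \<Rightarrow> complex" where
  "cfg_points base x k i = base + (\<Sum>m\<in>{1..k}. x (m,1)) + (if i = 1 then 0 else x (k,i))"

definition cfg_map :: "nat \<Rightarrow> (nat \<Rightarrow> nat) \<Rightarrow> complex \<Rightarrow> (nat \<times> nat \<Rightarrow> complex) \<Rightarrow> nat \<times> nat \<Rightarrow> complex" where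
  "cfg_map h n base x = (\<lambda>(k,i). if i = 1 then cfg_G n (cfg_points base x) k
                                 else cfg_F h n (cfg_points base x) k i)"

text \<open>J is the (complex) differential at x0 of the map \<Phi> on the coordinate space
  {v. \<forall>b\<notin>V. v b = 0} \<cong> \<complex>^V, written as a matrix, with the sum-norm.\<close>
definition has_jacobian_at ::
  "((nat \<times> nat \<Rightarrow> complex) \<Rightarrow> nat \<times> nat \<Rightarrow> complex) \<Rightarrow> (nat \<times> nat) set
     \<Rightarrow> (nat \<times> nat \<Rightarrow> complex) \<Rightarrow> (nat \<times> nat \<Rightarrow> nat \<times> nat \<Rightarrow> complex) \<Rightarrow> bool" where
  "has_jacobian_at \<Phi> V x0 J \<longleftrightarrow>
     (\<forall>e>0. \<exists>d>0. \<forall>v. (\<forall>b. b \<notin> V \<longrightarrow> v b = 0) \<and> (\<Sum>b\<in>V. cmod (v b)) < d \<longrightarrow>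
        (\<forall>a\<in>V. cmod (\<Phi> (\<lambda>b. x0 b + v b) a - \<Phi> x0 a - (\<Sum>b\<in>V. J a b * v b)) \<le> e * (\<Sum>b\<in>V. cmod (v b))))"

definition nondegenerate :: "nat \<Rightarrow> (nat \<Rightarrow> nat) \<Rightarrow> (nat \<Rightarrow> nat \<Rightarrow> complex) \<Rightarrow> bool" where
  "nondegenerate h n p \<longleftrightarrow>
     (\<exists>J. has_jacobian_at (cfg_map h n (p 0 1)) (cfg_V h n) (cfg_coords p) J \<and>
          bij_betw (\<lambda>v a. if a \<in> cfg_V h n then (\<Sum>b\<in>cfg_V h n. J a b * v b) else 0)
                   {v. \<forall>b. b \<notin> cfg_V h n \<longrightarrow> v b = 0} {v. \<forall>b. b \<notin> cfg_V h n \<longrightarrow> v b = 0})"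

end

theory Submission
  imports Defs
begin


definition Q :: "real \<Rightarrow> real \<Rightarrow> real \<Rightarrow> real \<Rightarrow> complex" where
  "Q a b c d = Complex (a + b * sqrt 2) (c + d * sqrt 2)"

lemma sb: "sqrt 2 * sqrt 2 = (2::real)" by simp

lemma Q_add: "Q a b c d + Q a' b' c' d' = Q (a+a') (b+b') (c+c') (d+d')"
  by (simp add: Q_def complex_eq_iff algebra_simps)
lemma Q_diff: "Q a b c d - Q a' b' c' d' = Q (a-a') (b-b') (c-c') (d-d')"
  by (simp add: Q_def complex_eq_iff algebra_simps)
lemma Q_minus: "- Q a b c d = Q (-a) (-b) (-c) (-d)"
  by (simp add: Q_def complex_eq_iff algebra_simps)
lemma Q_mult: "Q a b c d * Q a' b' c' d' = Q (a*a' + 2*b*b' - c*c' - 2*d*d') (a*b' + b*a' - c*d' - d*c')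
   (a*c' + c*a' + 2*(b*d' + d*b')) (a*d' + d*a' + b*c' + c*b')"
  by (simp add: Q_def complex_eq_iff algebra_simps sb flip: mult.assoc)

lemma Q_one: "Q 1 0 0 0 = 1" by (simp add: Q_def complex_eq_iff)
lemma Q_inv_intro: "Q a b c d * Q a' b' c' d' = Q 1 0 0 0 \<Longrightarrow> inverse (Q a b c d) = Q a' b' c' d'"
  by (rule inverse_unique) (simp add: Q_one)
lemma "inverse (Q 0 (-1/2) 1 0) = Q 0 (-1/3) (-2/3) 0"
  by (rule Q_inv_intro) (simp add: Q_mult)


definition Nv :: "(nat\<times>nat \<Rightarrow> complex) \<Rightarrow> real" where
  "Nv v = cmod (v(1,1)) + cmod (v(1,2)) + cmod (v(2,1)) + cmod (v(2,2)) + cmod (v(3,1))"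

definition small :: "((nat\<times>nat\<Rightarrow>complex) \<Rightarrow> complex) \<Rightarrow> bool" where
  "small f \<longleftrightarrow> (\<forall>e>0. \<exists>d>0. \<forall>v. Nv v < d \<longrightarrow> cmod (f v) \<le> e * Nv v)"

lemma Nv_nonneg: "Nv v \<ge> 0" by (simp add: Nv_def)

lemma small_add: assumes "small f" "small g" shows "small (\<lambda>v. f v + g v)"
  unfolding small_def
proof (intro allI impI)
  fix e :: real assume e: "e > 0"
  obtain d1 where d1: "d1 > 0" "\<forall>v. Nv v < d1 \<longrightarrow> cmod (f v) \<le> e/2 * Nv v"
    using assms(1) e unfolding small_def by (metis half_gt_zero)
  obtain d2 where d2: "d2 > 0" "\<forall>v. Nv v < d2 \<longrightarrow> cmod (g v) \<le> e/2 * Nv v"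
    using assms(2) e unfolding small_def by (metis half_gt_zero)
  show "\<exists>d>0. \<forall>v. Nv v < d \<longrightarrow> cmod (f v + g v) \<le> e * Nv v"
  proof (intro exI[of _ "min d1 d2"] conjI allI impI)
    show "min d1 d2 > 0" using d1 d2 by simp
    fix v assume "Nv v < min d1 d2"
    then have "cmod (f v) \<le> e/2 * Nv v" "cmod (g v) \<le> e/2 * Nv v" using d1 d2 by auto
    then show "cmod (f v + g v) \<le> e * Nv v"
      using norm_triangle_ineq[of "f v" "g v"] by linarith
  qed
qed

lemma small_mult: assumes "small f" shows "small (\<lambda>v. c * f v)"
  unfolding small_def
proof (intro allI impI)
  fix e :: real assume e: "e > 0"
  have c1: "cmod c + 1 > 0" using norm_ge_zero[of c] by linarith
  have "e / (cmod c + 1) > 0" using e c1 by simp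
  then obtain d where d: "d > 0" "\<forall>v. Nv v < d \<longrightarrow> cmod (f v) \<le> e / (cmod c + 1) * Nv v"
    using assms unfolding small_def by blast
  show "\<exists>d>0. \<forall>v. Nv v < d \<longrightarrow> cmod (c * f v) \<le> e * Nv v"
  proof (intro exI[of _ d] conjI allI impI)
    show "d > 0" by (rule d)
    fix v assume "Nv v < d"
    then have h: "cmod (f v) \<le> e / (cmod c + 1) * Nv v" using d by auto
    have "cmod (c * f v) = cmod c * cmod (f v)" by (simp add: norm_mult)
    also have "\<dots> \<le> (cmod c + 1) * (e / (cmod c + 1) * Nv v)"
      by (intro mult_mono h) auto
    also have "\<dots> = e * Nv v" using c1 by simp
    finally show "cmod (c * f v) \<le> e * Nv v" .
  qed
qed

definition bas :: "((nat\<times>nat\<Rightarrow>complex) \<Rightarrow> complex) \<Rightarrow> complex \<Rightarrow> (nat\<times>nat\<Rightarrow>complex) \<Rightarrow> complex" where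
  "bas A a0 v = inverse (A v) - inverse a0 + (A v - a0) * inverse a0 ^ 2"

lemma small_bas: assumes a0: "a0 \<noteq> 0" and bnd: "\<And>v. cmod (A v - a0) \<le> Nv v"
  shows "small (bas A a0)"
  unfolding small_def
proof (intro allI impI)
  fix e :: real assume e: "e > 0"
  define m where "m = cmod a0"
  have m: "m > 0" using a0 by (simp add: m_def)
  define d where "d = min (m/2) (e * m^3 / 2)"
  have d: "d > 0" using m e by (simp add: d_def)
  show "\<exists>d>0. \<forall>v. Nv v < d \<longrightarrow> cmod (bas A a0 v) \<le> e * Nv v"
  proof (intro exI[of _ d] conjI allI impI d)
    fix v assume Nd: "Nv v < d"
    define w where "w = A v - a0"
    have wN: "cmod w \<le> Nv v" using bnd by (simp add: w_def)
    have wm: "cmod w \<le> m/2" using wN Nd by (simp add: d_def)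
    have Av: "A v = a0 + w" by (simp add: w_def)
    have Am: "cmod (A v) \<ge> m/2"
      using norm_triangle_ineq2[of a0 "-w"] wm by (simp add: Av m_def)
    have A0: "A v \<noteq> 0" using Am m by auto
    have Ap: "cmod (A v) > 0" using Am m by linarith
    have eq: "bas A a0 v = w^2 / (a0^2 * A v)"
      unfolding bas_def w_def using A0 a0 by (simp add: field_simps power2_eq_square)
    have "cmod (bas A a0 v) = (cmod w)^2 / (m^2 * cmod (A v))"
      by (simp add: eq norm_divide norm_mult norm_power m_def)
    also have "\<dots> \<le> (cmod w)^2 / (m^2 * (m/2))"
      using Am m Ap by (intro divide_left_mono mult_left_mono mult_pos_pos) auto
    also have "\<dots> \<le> (Nv v)^2 / (m^2 * (m/2))"
      using wN m by (intro divide_right_mono power_mono) auto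
    also have "\<dots> = Nv v * Nv v * 2 / m^3" using m by (simp add: power2_eq_square power3_eq_cube)
    also have "\<dots> \<le> Nv v * (e * m^3 / 2) * 2 / m^3"
      using Nd m Nv_nonneg[of v] by (intro divide_right_mono mult_right_mono mult_left_mono) (auto simp: d_def)
    also have "\<dots> = e * Nv v" using m by simp
    finally show "cmod (bas A a0 v) \<le> e * Nv v" .
  qed
qed

lemma Nv_lin:
  assumes "cmod sa \<le> 1" "cmod sb \<le> 1" "cmod sc \<le> 1" "cmod sd \<le> 1" "cmod se \<le> 1"
  shows "cmod (sa*v(1,1) + sb*v(1,2) + sc*v(2,1) + sd*v(2,2) + se*v(3,1)) \<le> Nv v"
proof -
  have "\<And>s x. cmod s \<le> 1 \<Longrightarrow> cmod (s * x) \<le> cmod (x::complex)"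
    by (simp add: norm_mult mult_left_le_one_le)
  then have "cmod (sa*v(1,1)) \<le> cmod (v(1,1))" "cmod (sb*v(1,2)) \<le> cmod (v(1,2))"
    "cmod (sc*v(2,1)) \<le> cmod (v(2,1))" "cmod (sd*v(2,2)) \<le> cmod (v(2,2))" "cmod (se*v(3,1)) \<le> cmod (v(3,1))"
    using assms by auto
  then show ?thesis unfolding Nv_def
    using norm_triangle_ineq[of "sa*v(1,1) + sb*v(1,2) + sc*v(2,1) + sd*v(2,2)" "se*v(3,1)"]
      norm_triangle_ineq[of "sa*v(1,1) + sb*v(1,2) + sc*v(2,1)" "sd*v(2,2)"]
      norm_triangle_ineq[of "sa*v(1,1) + sb*v(1,2)" "sc*v(2,1)"]
      norm_triangle_ineq[of "sa*v(1,1)" "sb*v(1,2)"]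
    by linarith
qed


lemma Nv_lin':
  assumes "A = sa*v(1,1) + sb*v(1,2) + sc*v(2,1) + sd*v(2,2) + se*v(3,1)"
    "cmod sa \<le> 1" "cmod sb \<le> 1" "cmod sc \<le> 1" "cmod sd \<le> 1" "cmod se \<le> 1"
  shows "cmod A \<le> Nv v"
  using Nv_lin[OF assms(2-6)] assms(1) by simp

definition isq :: "complex \<Rightarrow> complex" where "isq z = inverse z ^ 2"

definition Dsum :: "(nat\<times>nat \<Rightarrow> nat\<times>nat \<Rightarrow> complex) \<Rightarrow> nat\<times>nat \<Rightarrow> (nat\<times>nat \<Rightarrow> complex) \<Rightarrow> complex" where
  "Dsum J a v = J a (1,1) * v(1,1) + J a (1,2) * v(1,2) + J a (2,1) * v(2,1) + J a (2,2) * v(2,2) + J a (3,1) * v(3,1)"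

definition g11 :: "complex \<Rightarrow> complex \<Rightarrow> complex \<Rightarrow> complex \<Rightarrow> complex \<Rightarrow> complex" where
  "g11 l1 u1 l2 u2 l3 = (1/2) * inverse (l1) + (1/2) * inverse (l1 + u1)"

definition g12 :: "complex \<Rightarrow> complex \<Rightarrow> complex \<Rightarrow> complex \<Rightarrow> complex \<Rightarrow> complex" where
  "g12 l1 u1 l2 u2 l3 = (1/2) * inverse (u1) + (-1/4) * inverse (u1 - l2) + (-1/4) * inverse (u1 - l2 - u2) + (-1/2) * inverse (l1 + u1)"

definition g21 :: "complex \<Rightarrow> complex \<Rightarrow> complex \<Rightarrow> complex \<Rightarrow> complex \<Rightarrow> complex" where
  "g21 l1 u1 l2 u2 l3 = (1/4) * inverse (l2) + (1/4) * inverse (l2 - u1) + (1/4) * inverse (l2 + u2) + (1/4) * inverse (l2 + u2 - u1)"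

definition g22 :: "complex \<Rightarrow> complex \<Rightarrow> complex \<Rightarrow> complex \<Rightarrow> complex \<Rightarrow> complex" where
  "g22 l1 u1 l2 u2 l3 = (1/2) * inverse (u2) + (-1/2) * inverse (u2 - l3) + (-1/4) * inverse (l2 + u2) + (-1/4) * inverse (l2 + u2 - u1)"

definition g31 :: "complex \<Rightarrow> complex \<Rightarrow> complex \<Rightarrow> complex \<Rightarrow> complex \<Rightarrow> complex" where
  "g31 l1 u1 l2 u2 l3 = (1/2) * inverse (l3) + (1/2) * inverse (l3 - u2)"

definition Jg :: "complex \<Rightarrow> complex \<Rightarrow> complex \<Rightarrow> complex \<Rightarrow> complex \<Rightarrow> nat\<times>nat \<Rightarrow> nat\<times>nat \<Rightarrow> complex" where
  "Jg l1 u1 l2 u2 l3 a b = (if a = (1,1) then (if b = (1,1) then (-1/2) * isq (l1) + (-1/2) * isq (l1 + u1) else if b = (1,2) then (-1/2) * isq (l1 + u1) else 0) else if a = (1,2) then (if b = (1,1) then (1/2) * isq (l1 + u1) else if b = (1,2) then (-1/2) * isq (u1) + (1/4) * isq (u1 - l2) + (1/4) * isq (u1 - l2 - u2) + (1/2) * isq (l1 + u1) else if b = (2,1) then (-1/4) * isq (u1 - l2) + (-1/4) * isq (u1 - l2 - u2) else if b = (2,2) then (-1/4) * isq (u1 - l2 - u2) else 0) else if a = (2,1) then (if b = (1,2) then (1/4) * isq (l2 - u1) + (1/4) * isq (l2 + u2 - u1) else if b = (2,1) then (-1/4) * isq (l2) + (-1/4) * isq (l2 - u1) + (-1/4) * isq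 (l2 + u2) + (-1/4) * isq (l2 + u2 - u1) else if b = (2,2) then (-1/4) * isq (l2 + u2) + (-1/4) * isq (l2 + u2 - u1) else 0) else if a = (2,2) then (if b = (1,2) then (-1/4) * isq (l2 + u2 - u1) else if b = (2,1) then (1/4) * isq (l2 + u2) + (1/4) * isq (l2 + u2 - u1) else if b = (2,2) then (-1/2) * isq (u2) + (1/2) * isq (u2 - l3) + (1/4) * isq (l2 + u2) + (1/4) * isq (l2 + u2 - u1) else if b = (3,1) then (-1/2) * isq (u2 - l3) else 0) else if a = (3,1) then (if b = (2,2) then (1/2) * isq (l3 - u2) else if b = (3,1) then (-1/2) * isq (l3) + (-1/2) * isq (l3 - u2) else 0) else 0)"

lemma comp11:
  fixes l1 u1 l2 u2 l3 :: complex
  assumes "l1 \<noteq> 0" "l1 + u1 \<noteq> 0"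
  shows "small (\<lambda>v. g11 (l1 + v(1,1)) (u1 + v(1,2)) (l2 + v(2,1)) (u2 + v(2,2)) (l3 + v(3,1)) - g11 l1 u1 l2 u2 l3 - Dsum (Jg l1 u1 l2 u2 l3) (1,1) v)"
proof -
  have eq: "(\<lambda>v. g11 (l1 + v(1,1)) (u1 + v(1,2)) (l2 + v(2,1)) (u2 + v(2,2)) (l3 + v(3,1)) - g11 l1 u1 l2 u2 l3 - Dsum (Jg l1 u1 l2 u2 l3) (1,1) v) = (\<lambda>v. (1/2) * bas (\<lambda>v. (l1 + v(1,1))) (l1) v + (1/2) * bas (\<lambda>v. (l1 + v(1,1)) + (u1 + v(1,2))) (l1 + u1) v)"
    by (rule ext) (simp add: g11_def Jg_def Dsum_def bas_def isq_def algebra_simps)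

  have t0: "small (bas (\<lambda>v. (l1 + v(1,1))) (l1))"
    by (rule small_bas[OF assms(1)], rule Nv_lin'[where sa="1" and sb="0" and sc="0" and sd="0" and se="0"]) (simp_all add: algebra_simps)

  have t1: "small (bas (\<lambda>v. (l1 + v(1,1)) + (u1 + v(1,2))) (l1 + u1))"
    by (rule small_bas[OF assms(2)], rule Nv_lin'[where sa="1" and sb="1" and sc="0" and sd="0" and se="0"]) (simp_all add: algebra_simps)

  show ?thesis unfolding eq by (rule small_add[OF small_mult[OF t0, of "(1/2)"] small_mult[OF t1, of "(1/2)"]])
qed

lemma comp12:
  fixes l1 u1 l2 u2 l3 :: complex
  assumes "u1 \<noteq> 0" "u1 - l2 \<noteq> 0" "u1 - l2 - u2 \<noteq> 0" "l1 + u1 \<noteq> 0"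
  shows "small (\<lambda>v. g12 (l1 + v(1,1)) (u1 + v(1,2)) (l2 + v(2,1)) (u2 + v(2,2)) (l3 + v(3,1)) - g12 l1 u1 l2 u2 l3 - Dsum (Jg l1 u1 l2 u2 l3) (1,2) v)"
proof -
  have eq: "(\<lambda>v. g12 (l1 + v(1,1)) (u1 + v(1,2)) (l2 + v(2,1)) (u2 + v(2,2)) (l3 + v(3,1)) - g12 l1 u1 l2 u2 l3 - Dsum (Jg l1 u1 l2 u2 l3) (1,2) v) = (\<lambda>v. (1/2) * bas (\<lambda>v. (u1 + v(1,2))) (u1) v + (-1/4) * bas (\<lambda>v. (u1 + v(1,2)) - (l2 + v(2,1))) (u1 - l2) v + (-1/4) * bas (\<lambda>v. (u1 + v(1,2)) - (l2 + v(2,1)) - (u2 + v(2,2))) (u1 - l2 - u2) v + (-1/2) * bas (\<lambda>v. (l1 + v(1,1)) + (u1 + v(1,2))) (l1 + u1) v)"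
    by (rule ext) (simp add: g12_def Jg_def Dsum_def bas_def isq_def algebra_simps)

  have t0: "small (bas (\<lambda>v. (u1 + v(1,2))) (u1))"
    by (rule small_bas[OF assms(1)], rule Nv_lin'[where sa="0" and sb="1" and sc="0" and sd="0" and se="0"]) (simp_all add: algebra_simps)

  have t1: "small (bas (\<lambda>v. (u1 + v(1,2)) - (l2 + v(2,1))) (u1 - l2))"
    by (rule small_bas[OF assms(2)], rule Nv_lin'[where sa="0" and sb="1" and sc="-1" and sd="0" and se="0"]) (simp_all add: algebra_simps)

  have t2: "small (bas (\<lambda>v. (u1 + v(1,2)) - (l2 + v(2,1)) - (u2 + v(2,2))) (u1 - l2 - u2))"
    by (rule small_bas[OF assms(3)], rule Nv_lin'[where sa="0" and sb="1" and sc="-1" and sd="-1" and se="0"]) (simp_all add: algebra_simps)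

  have t3: "small (bas (\<lambda>v. (l1 + v(1,1)) + (u1 + v(1,2))) (l1 + u1))"
    by (rule small_bas[OF assms(4)], rule Nv_lin'[where sa="1" and sb="1" and sc="0" and sd="0" and se="0"]) (simp_all add: algebra_simps)

  show ?thesis unfolding eq by (rule small_add[OF small_add[OF small_add[OF small_mult[OF t0, of "(1/2)"] small_mult[OF t1, of "(-1/4)"]] small_mult[OF t2, of "(-1/4)"]] small_mult[OF t3, of "(-1/2)"]])
qed

lemma comp21:
  fixes l1 u1 l2 u2 l3 :: complex
  assumes "l2 \<noteq> 0" "l2 - u1 \<noteq> 0" "l2 + u2 \<noteq> 0" "l2 + u2 - u1 \<noteq> 0"
  shows "small (\<lambda>v. g21 (l1 + v(1,1)) (u1 + v(1,2)) (l2 + v(2,1)) (u2 + v(2,2)) (l3 + v(3,1)) - g21 l1 u1 l2 u2 l3 - Dsum (Jg l1 u1 l2 u2 l3) (2,1) v)"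
proof -
  have eq: "(\<lambda>v. g21 (l1 + v(1,1)) (u1 + v(1,2)) (l2 + v(2,1)) (u2 + v(2,2)) (l3 + v(3,1)) - g21 l1 u1 l2 u2 l3 - Dsum (Jg l1 u1 l2 u2 l3) (2,1) v) = (\<lambda>v. (1/4) * bas (\<lambda>v. (l2 + v(2,1))) (l2) v + (1/4) * bas (\<lambda>v. (l2 + v(2,1)) - (u1 + v(1,2))) (l2 - u1) v + (1/4) * bas (\<lambda>v. (l2 + v(2,1)) + (u2 + v(2,2))) (l2 + u2) v + (1/4) * bas (\<lambda>v. (l2 + v(2,1)) + (u2 + v(2,2)) - (u1 + v(1,2))) (l2 + u2 - u1) v)"
    by (rule ext) (simp add: g21_def Jg_def Dsum_def bas_def isq_def algebra_simps)

  have t0: "small (bas (\<lambda>v. (l2 + v(2,1))) (l2))"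
    by (rule small_bas[OF assms(1)], rule Nv_lin'[where sa="0" and sb="0" and sc="1" and sd="0" and se="0"]) (simp_all add: algebra_simps)

  have t1: "small (bas (\<lambda>v. (l2 + v(2,1)) - (u1 + v(1,2))) (l2 - u1))"
    by (rule small_bas[OF assms(2)], rule Nv_lin'[where sa="0" and sb="-1" and sc="1" and sd="0" and se="0"]) (simp_all add: algebra_simps)

  have t2: "small (bas (\<lambda>v. (l2 + v(2,1)) + (u2 + v(2,2))) (l2 + u2))"
    by (rule small_bas[OF assms(3)], rule Nv_lin'[where sa="0" and sb="0" and sc="1" and sd="1" and se="0"]) (simp_all add: algebra_simps)

  have t3: "small (bas (\<lambda>v. (l2 + v(2,1)) + (u2 + v(2,2)) - (u1 + v(1,2))) (l2 + u2 - u1))"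
    by (rule small_bas[OF assms(4)], rule Nv_lin'[where sa="0" and sb="-1" and sc="1" and sd="1" and se="0"]) (simp_all add: algebra_simps)

  show ?thesis unfolding eq by (rule small_add[OF small_add[OF small_add[OF small_mult[OF t0, of "(1/4)"] small_mult[OF t1, of "(1/4)"]] small_mult[OF t2, of "(1/4)"]] small_mult[OF t3, of "(1/4)"]])
qed

lemma comp22:
  fixes l1 u1 l2 u2 l3 :: complex
  assumes "u2 \<noteq> 0" "u2 - l3 \<noteq> 0" "l2 + u2 \<noteq> 0" "l2 + u2 - u1 \<noteq> 0"
  shows "small (\<lambda>v. g22 (l1 + v(1,1)) (u1 + v(1,2)) (l2 + v(2,1)) (u2 + v(2,2)) (l3 + v(3,1)) - g22 l1 u1 l2 u2 l3 - Dsum (Jg l1 u1 l2 u2 l3) (2,2) v)"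
proof -
  have eq: "(\<lambda>v. g22 (l1 + v(1,1)) (u1 + v(1,2)) (l2 + v(2,1)) (u2 + v(2,2)) (l3 + v(3,1)) - g22 l1 u1 l2 u2 l3 - Dsum (Jg l1 u1 l2 u2 l3) (2,2) v) = (\<lambda>v. (1/2) * bas (\<lambda>v. (u2 + v(2,2))) (u2) v + (-1/2) * bas (\<lambda>v. (u2 + v(2,2)) - (l3 + v(3,1))) (u2 - l3) v + (-1/4) * bas (\<lambda>v. (l2 + v(2,1)) + (u2 + v(2,2))) (l2 + u2) v + (-1/4) * bas (\<lambda>v. (l2 + v(2,1)) + (u2 + v(2,2)) - (u1 + v(1,2))) (l2 + u2 - u1) v)"
    by (rule ext) (simp add: g22_def Jg_def Dsum_def bas_def isq_def algebra_simps)

  have t0: "small (bas (\<lambda>v. (u2 + v(2,2))) (u2))"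
    by (rule small_bas[OF assms(1)], rule Nv_lin'[where sa="0" and sb="0" and sc="0" and sd="1" and se="0"]) (simp_all add: algebra_simps)

  have t1: "small (bas (\<lambda>v. (u2 + v(2,2)) - (l3 + v(3,1))) (u2 - l3))"
    by (rule small_bas[OF assms(2)], rule Nv_lin'[where sa="0" and sb="0" and sc="0" and sd="1" and se="-1"]) (simp_all add: algebra_simps)

  have t2: "small (bas (\<lambda>v. (l2 + v(2,1)) + (u2 + v(2,2))) (l2 + u2))"
    by (rule small_bas[OF assms(3)], rule Nv_lin'[where sa="0" and sb="0" and sc="1" and sd="1" and se="0"]) (simp_all add: algebra_simps)

  have t3: "small (bas (\<lambda>v. (l2 + v(2,1)) + (u2 + v(2,2)) - (u1 + v(1,2))) (l2 + u2 - u1))"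
    by (rule small_bas[OF assms(4)], rule Nv_lin'[where sa="0" and sb="-1" and sc="1" and sd="1" and se="0"]) (simp_all add: algebra_simps)

  show ?thesis unfolding eq by (rule small_add[OF small_add[OF small_add[OF small_mult[OF t0, of "(1/2)"] small_mult[OF t1, of "(-1/2)"]] small_mult[OF t2, of "(-1/4)"]] small_mult[OF t3, of "(-1/4)"]])
qed

lemma comp31:
  fixes l1 u1 l2 u2 l3 :: complex
  assumes "l3 \<noteq> 0" "l3 - u2 \<noteq> 0"
  shows "small (\<lambda>v. g31 (l1 + v(1,1)) (u1 + v(1,2)) (l2 + v(2,1)) (u2 + v(2,2)) (l3 + v(3,1)) - g31 l1 u1 l2 u2 l3 - Dsum (Jg l1 u1 l2 u2 l3) (3,1) v)"
proof -
  have eq: "(\<lambda>v. g31 (l1 + v(1,1)) (u1 + v(1,2)) (l2 + v(2,1)) (u2 + v(2,2)) (l3 + v(3,1)) - g31 l1 u1 l2 u2 l3 - Dsum (Jg l1 u1 l2 u2 l3) (3,1) v) = (\<lambda>v. (1/2) * bas (\<lambda>v. (l3 + v(3,1))) (l3) v + (1/2) * bas (\<lambda>v. (l3 + v(3,1)) - (u2 + v(2,2))) (l3 - u2) v)"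
    by (rule ext) (simp add: g31_def Jg_def Dsum_def bas_def isq_def algebra_simps)

  have t0: "small (bas (\<lambda>v. (l3 + v(3,1))) (l3))"
    by (rule small_bas[OF assms(1)], rule Nv_lin'[where sa="0" and sb="0" and sc="0" and sd="0" and se="1"]) (simp_all add: algebra_simps)

  have t1: "small (bas (\<lambda>v. (l3 + v(3,1)) - (u2 + v(2,2))) (l3 - u2))"
    by (rule small_bas[OF assms(2)], rule Nv_lin'[where sa="0" and sb="0" and sc="0" and sd="-1" and se="1"]) (simp_all add: algebra_simps)

  show ?thesis unfolding eq by (rule small_add[OF small_mult[OF t0, of "(1/2)"] small_mult[OF t1, of "(1/2)"]])
qed

lemma Q_zero: "Q 0 0 0 0 = 0" by (simp add: Q_def complex_eq_iff)
lemma Q_num: "(numeral w :: complex) = Q (numeral w) 0 0 0" by (simp add: Q_def complex_eq_iff)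
lemma Q_ii: "\<i> = Q 0 0 1 0" by (simp add: Q_def complex_eq_iff)
lemma Q_s2': "complex_of_real (sqrt 2) = Q 0 1 0 0" by (simp add: Q_def complex_eq_iff)
lemma Q_s2: "complex_of_real (sqrt 2 / 2) = Q 0 (1/2) 0 0" by (simp add: Q_def complex_eq_iff)
lemma Q_eq_0: "Q a b c d = 0 \<longleftrightarrow> a + b * sqrt 2 = 0 \<and> c + d * sqrt 2 = 0"
  by (simp add: Q_def complex_eq_iff)

lemma Q_cong: "a = a' \<Longrightarrow> b = b' \<Longrightarrow> c = c' \<Longrightarrow> d = d' \<Longrightarrow> Q a b c d = Q a' b' c' d'" by simp

lemma Q_inv:
  assumes "(a*a+2*b*b+c*c+2*d*d)^2 - 2*(2*a*b+2*c*d)^2 \<noteq> 0"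
  shows "inverse (Q a b c d) = Q a b (-c) (-d) * Q ((a*a+2*b*b+c*c+2*d*d)/((a*a+2*b*b+c*c+2*d*d)^2 - 2*(2*a*b+2*c*d)^2))
       (-(2*a*b+2*c*d)/((a*a+2*b*b+c*c+2*d*d)^2 - 2*(2*a*b+2*c*d)^2)) 0 0"
proof -
  define m where "m = a*a+2*b*b+c*c+2*d*d"
  define n where "n = 2*a*b+2*c*d"
  define D where "D = m^2 - 2*n^2"
  have D: "D \<noteq> 0" using assms by (simp add: m_def n_def D_def)
  have 1: "Q a b c d * Q a b (-c) (-d) = Q m n 0 0"
    by (simp add: Q_mult m_def n_def algebra_simps)
  have 2: "Q m n 0 0 * Q (m/D) (-n/D) 0 0 = 1"
    unfolding Q_mult Q_one[symmetric]
  proof (rule Q_cong)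
    have "m * (m / D) + 2 * n * (- n / D) - 0 * 0 - 2 * 0 * 0 = (m^2 - 2*n^2) / D"
      using D by (simp add: field_simps power2_eq_square)
    also have "\<dots> = 1" using D by (simp add: D_def)
    finally show "m * (m / D) + 2 * n * (- n / D) - 0 * 0 - 2 * 0 * 0 = 1" .
  qed (simp_all add: algebra_simps)
  have "Q a b c d * (Q a b (-c) (-d) * Q (m/D) (-n/D) 0 0) = 1"
    by (simp only: mult.assoc[symmetric] 1 2)
  then show ?thesis unfolding m_def n_def D_def by (rule inverse_unique)
qed

lemma cdiv: "(x::complex) / y = x * inverse y" by (rule divide_inverse)
lemmas qsimps = Q_add Q_diff Q_minus Q_mult Q_inv power2_eq_square cdiv Q_num Q_ii Q_s2 Q_s2'
  Q_one[symmetric] Q_zero[symmetric]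

definition Jn :: "nat\<times>nat \<Rightarrow> nat\<times>nat \<Rightarrow> complex" where
  "Jn a b = (if a = (1,1) then (if b = (1,1) then Q (2/9) (0) (0) (0) else if b = (1,2) then Q (1/9) (0) (0) (2/9) else if b = (2,1) then Q (0) (0) (0) (0) else if b = (2,2) then Q (0) (0) (0) (0) else if b = (3,1) then Q (0) (0) (0) (0) else 0) else if a = (1,2) then (if b = (1,1) then Q (-1/9) (0) (0) (-2/9) else if b = (1,2) then Q (-7/12) (0) (0) (-1/6) else if b = (2,1) then Q (2/9) (0) (0) (-1/18) else if b = (2,2) then Q (1/4) (0) (0) (0) else if b = (3,1) then Q (0) (0) (0) (0) else 0) else if a = (2,1) then (if b = (1,1) then Q (0) (0) (0) (0) else if b = (1,2) then Q (-2/9) (0) (0) (1/18) else if b = (2,1) then Q (4/9) (0) (0) (0) else if b = (2,2) then Q (2/9) (0) (0) (1/18) else if b = (3,1) then Q (0) (0) (0) (0) else 0) else if a = (2,2) then (if b = (1,1) then Q (0) (0) (0) (0) else if b = (1,2) then Q (1/4) (0) (0) (0) else if b = (2,1) then Q (-2/9) (0) (0) (-1/18) else if b = (2,2) then Q (-7/12) (0) (0) (1/6) else if b = (3,1) then Q (1/9) (0) (0) (-2/9) else 0) else if a = (3,1) then (if b = (1,1) then Q (0) (0) (0) (0) else if b = (1,2) then Q (0) (0) (0) (0) else if b = (2,1) then Q (0) (0) (0) (0) else if b = (2,2) then Q (-1/9) (0) (0) (2/9) else if b = (3,1) then Q (2/9) (0) (0) (0) else 0) else 0)"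

definition Km :: "nat\<times>nat \<Rightarrow> nat\<times>nat \<Rightarrow> complex" where
  "Km a b = (if a = (1,1) then (if b = (1,1) then Q (59/24) (0) (0) (7/6) else if b = (1,2) then Q (7/12) (0) (0) (7/6) else if b = (2,1) then Q (-7/12) (0) (0) (-5/12) else if b = (2,2) then Q (1/12) (0) (0) (1/6) else if b = (3,1) then Q (-3/8) (0) (0) (0) else 0) else if a = (1,2) then (if b = (1,1) then Q (-7/12) (0) (0) (-7/6) else if b = (1,2) then Q (-7/6) (0) (0) (0) else if b = (2,1) then Q (1/2) (0) (0) (-1/6) else if b = (2,2) then Q (-1/6) (0) (0) (0) else if b = (3,1) then Q (1/12) (0) (0) (-1/6) else 0) else if a = (2,1) then (if b = (1,1) then Q (-7/12) (0) (0) (-5/12) else if b = (1,2) then Q (-1/2) (0) (0) (1/6) else if b = (2,1) then Q (8/3) (0) (0) (0) else if b = (2,2) then Q (1/2) (0) (0) (1/6) else if b = (3,1) then Q (-7/12) (0) (0) (5/12) else 0) else if a = (2,2) then (if b = (1,1) then Q (-1/12) (0) (0) (-1/6) else if b = (1,2) then Q (-1/6) (0) (0) (0) else if b = (2,1) then Q (-1/2) (0) (0) (-1/6) else if b = (2,2) then Q (-7/6) (0) (0) (0) else if b = (3,1) then Q (7/12) (0) (0) (-7/6) else 0) else if a = (3,1) then (if b = (1,1) then Q (-3/8) (0) (0) (0) else if b = (1,2) then Q (-1/12) (0) (0) (1/6) else if b = (2,1) then Q (-7/12) (0) (0) (5/12) else if b = (2,2) then Q (-7/12) (0) (0) (7/6)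 else if b = (3,1) then Q (59/24) (0) (0) (-7/6) else 0) else 0)"

lemma Jg_val: "Jg (Q 0 (-1/2) 1 0) (Q 0 1 0 0) (Q 0 0 1 0) (Q 0 1 0 0) (Q 0 (1/2) 1 0) = Jn"
  by (intro ext) (simp add: Jg_def Jn_def isq_def qsimps)

definition V0 :: "(nat\<times>nat) set" where "V0 = {(1,1),(1,2),(2,1),(2,2),(3,1)}"

lemma JK: "a \<in> V0 \<Longrightarrow> c \<in> V0 \<Longrightarrow> (\<Sum>b\<in>V0. Jn a b * Km b c) = (if a = c then 1 else 0)"
  unfolding V0_def by (auto simp: Jn_def Km_def qsimps)

lemma KJ: "a \<in> V0 \<Longrightarrow> c \<in> V0 \<Longrightarrow> (\<Sum>b\<in>V0. Km a b * Jn b c) = (if a = c then 1 else 0)"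
  unfolding V0_def by (auto simp: Jn_def Km_def qsimps)
lemma ivl2: "{1..2::nat} = {1,2}" "{Suc 0..2} = {1,2}" by auto
lemma ivl3: "{1..3::nat} = {1,2,3}" "{Suc 0..3} = {1,2,3}" by auto
lemma sdiff: "{Suc 0, 2} - {2} = {1::nat}" "{Suc 0, 2} - {Suc 0} = {2::nat}" "{Suc 0} - {Suc 0} = ({}::nat set)"
  "{1, 2} - {2} = {1::nat}" "{1, 2} - {1} = {2::nat}" "{1} - {1} = ({}::nat set)" by auto
lemma s2n: "Suc (Suc 0) = 2" "Suc 2 = 3" by simp_all
lemma ivl1: "{1..1::nat} = {1}" "{Suc 0..Suc 0} = {1}" by auto
lemmas g_defs = g11_def g12_def g21_def g22_def g31_def
lemma map_eval:
  assumes n: "n = (\<lambda>k. if k = 1 \<or> k = 2 then 2 else 1)"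
  shows "cfg_map 3 n base x (1,1) = g11 (x(1,1)) (x(1,2)) (x(2,1)) (x(2,2)) (x(3,1))"
    "cfg_map 3 n base x (1,2) = g12 (x(1,1)) (x(1,2)) (x(2,1)) (x(2,2)) (x(3,1))"
    "cfg_map 3 n base x (2,1) = g21 (x(1,1)) (x(1,2)) (x(2,1)) (x(2,2)) (x(3,1))"
    "cfg_map 3 n base x (2,2) = g22 (x(1,1)) (x(1,2)) (x(2,1)) (x(2,2)) (x(3,1))"
    "cfg_map 3 n base x (3,1) = g31 (x(1,1)) (x(1,2)) (x(2,1)) (x(2,2)) (x(3,1))"
proof -
  have nv: "n 0 = 1" "n 1 = 2" "n 2 = 2" "n 3 = 1" "n (Suc 0) = 2" by (simp_all add: n)
  have cv: "cfg_c n 0 = 1" "cfg_c n 1 = 1/2" "cfg_c n 2 = 1/2" "cfg_c n 3 = 1" "cfg_c n (Suc 0) = 1/2"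
    by (simp_all add: cfg_c_def nv)
  have cp: "cfg_points base x 0 1 = base" "cfg_points base x 1 1 = base + x(1,1)" "cfg_points base x 1 2 = base + x(1,1) + x(1,2)"
     "cfg_points base x 2 1 = base + x(1,1) + x(2,1)" "cfg_points base x 2 2 = base + x(1,1) + x(2,1) + x(2,2)"
     "cfg_points base x 3 1 = base + x(1,1) + x(2,1) + x(3,1)"
    by (simp_all add: cfg_points_def ivl1 ivl2 ivl3)
  have cp': "cfg_points base x 0 (Suc 0) = base" "cfg_points base x (Suc 0) (Suc 0) = base + x(1,1)" "cfg_points base x (Suc 0) 2 = base + x(1,1) + x(1,2)"
     "cfg_points base x 2 (Suc 0) = base + x(1,1) + x(2,1)" "cfg_points base x 3 (Suc 0) = base + x(1,1) + x(2,1) + x(3,1)"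
    using cp by simp_all
  show "cfg_map 3 n base x (1,1) = g11 (x(1,1)) (x(1,2)) (x(2,1)) (x(2,2)) (x(3,1))"
  apply (simp add: cfg_map_def cfg_G_def nv ivl1 ivl2 ivl3 sdiff s2n)
  apply (simp only: cv cp cp')
  apply (simp only: g_defs divide_inverse)
  apply (simp add: algebra_simps power2_eq_square)
  done
  show "cfg_map 3 n base x (1,2) = g12 (x(1,1)) (x(1,2)) (x(2,1)) (x(2,2)) (x(3,1))"
  apply (simp add: cfg_map_def cfg_F_def nv ivl1 ivl2 ivl3 sdiff s2n)
  apply (simp only: cv cp cp')
  apply (simp only: g_defs divide_inverse)
  apply (simp add: algebra_simps power2_eq_square)
  done
  show "cfg_map 3 n base x (2,1) = g21 (x(1,1)) (x(1,2)) (x(2,1)) (x(2,2)) (x(3,1))"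
  apply (simp add: cfg_map_def cfg_G_def nv ivl1 ivl2 ivl3 sdiff s2n)
  apply (simp only: cv cp cp')
  apply (simp only: g_defs divide_inverse)
  apply (simp add: algebra_simps power2_eq_square)
  done
  show "cfg_map 3 n base x (2,2) = g22 (x(1,1)) (x(1,2)) (x(2,1)) (x(2,2)) (x(3,1))"
  apply (simp add: cfg_map_def cfg_F_def nv ivl1 ivl2 ivl3 sdiff s2n)
  apply (simp only: cv cp cp')
  apply (simp only: g_defs divide_inverse)
  apply (simp add: algebra_simps power2_eq_square)
  done
  show "cfg_map 3 n base x (3,1) = g31 (x(1,1)) (x(1,2)) (x(2,1)) (x(2,2)) (x(3,1))"
  apply (simp add: cfg_map_def cfg_G_def nv ivl1 ivl2 ivl3 sdiff s2n)
  apply (simp only: cv cp cp')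
  apply (simp only: g_defs divide_inverse)
  apply (simp add: algebra_simps power2_eq_square)
  done
qed

definition L1c :: complex where "L1c = Q 0 (-1/2) 1 0"
definition U1c :: complex where "U1c = Q 0 1 0 0"
definition L2c :: complex where "L2c = Q 0 0 1 0"
definition U2c :: complex where "U2c = Q 0 1 0 0"
definition L3c :: complex where "L3c = Q 0 (1/2) 1 0"
lemmas Lc_defs = L1c_def U1c_def L2c_def U2c_def L3c_def

lemma sumV0: "(\<Sum>b\<in>V0. f b) = f (1,1) + f (1,2) + f (2,1) + f (2,2) + f (3,1)"
  unfolding V0_def by (simp add: add.assoc)
lemma Nv_sum: "Nv v = (\<Sum>b\<in>V0. cmod (v b))" by (simp add: Nv_def sumV0)
lemma Dsum_sum: "Dsum J a v = (\<Sum>b\<in>V0. J a b * v b)" by (simp add: Dsum_def sumV0)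
lemma ballV0: "P (1,1) \<Longrightarrow> P (1,2) \<Longrightarrow> P (2,1) \<Longrightarrow> P (2,2) \<Longrightarrow> P (3,1) \<Longrightarrow> \<forall>a\<in>V0. P a"
  unfolding V0_def by auto

lemma small5:
  assumes "small f1" "small f2" "small f3" "small f4" "small f5" "e > 0"
  shows "\<exists>d>0. \<forall>v. Nv v < d \<longrightarrow> cmod (f1 v) \<le> e * Nv v \<and> cmod (f2 v) \<le> e * Nv v \<and> cmod (f3 v) \<le> e * Nv v \<and> cmod (f4 v) \<le> e * Nv v \<and> cmod (f5 v) \<le> e * Nv v"
proof -
  obtain d1 where d1: "d1 > 0" "\<forall>v. Nv v < d1 \<longrightarrow> cmod (f1 v) \<le> e * Nv v" using assms(1,6) unfolding small_def by blast
  obtain d2 where d2: "d2 > 0" "\<forall>v. Nv v < d2 \<longrightarrow> cmod (f2 v) \<le> e * Nv v" using assms(2,6) unfolding small_def by blast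
  obtain d3 where d3: "d3 > 0" "\<forall>v. Nv v < d3 \<longrightarrow> cmod (f3 v) \<le> e * Nv v" using assms(3,6) unfolding small_def by blast
  obtain d4 where d4: "d4 > 0" "\<forall>v. Nv v < d4 \<longrightarrow> cmod (f4 v) \<le> e * Nv v" using assms(4,6) unfolding small_def by blast
  obtain d5 where d5: "d5 > 0" "\<forall>v. Nv v < d5 \<longrightarrow> cmod (f5 v) \<le> e * Nv v" using assms(5,6) unfolding small_def by blast
  show ?thesis
    by (rule exI[of _ "min d1 (min d2 (min d3 (min d4 d5)))"]) (use d1 d2 d3 d4 d5 in auto)
qed

lemma small_jac:
  assumes e11: "\<And>v. Phi (\<lambda>b. x0 b + v b) (1,1) - Phi x0 (1,1) - Dsum J (1,1) v = f1 v"
    and e12: "\<And>v. Phi (\<lambda>b. x0 b + v b) (1,2) - Phi x0 (1,2) - Dsum J (1,2) v = f2 v"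
    and e21: "\<And>v. Phi (\<lambda>b. x0 b + v b) (2,1) - Phi x0 (2,1) - Dsum J (2,1) v = f3 v"
    and e22: "\<And>v. Phi (\<lambda>b. x0 b + v b) (2,2) - Phi x0 (2,2) - Dsum J (2,2) v = f4 v"
    and e31: "\<And>v. Phi (\<lambda>b. x0 b + v b) (3,1) - Phi x0 (3,1) - Dsum J (3,1) v = f5 v"
    and s: "small f1" "small f2" "small f3" "small f4" "small f5"
  shows "has_jacobian_at Phi V0 x0 J"
  unfolding has_jacobian_at_def
proof (intro allI impI)
  fix e :: real assume e: "e > 0"
  obtain d where d: "d > 0" and dv: "\<forall>v. Nv v < d \<longrightarrow> cmod (f1 v) \<le> e * Nv v \<and> cmod (f2 v) \<le> e * Nv v \<and> cmod (f3 v) \<le> e * Nv v \<and> cmod (f4 v) \<le> e * Nv v \<and> cmod (f5 v) \<le> e * Nv v"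
    using small5[OF s e] by blast
  show "\<exists>d>0. \<forall>v. (\<forall>b. b \<notin> V0 \<longrightarrow> v b = 0) \<and> (\<Sum>b\<in>V0. cmod (v b)) < d \<longrightarrow>
        (\<forall>a\<in>V0. cmod (Phi (\<lambda>b. x0 b + v b) a - Phi x0 a - (\<Sum>b\<in>V0. J a b * v b)) \<le> e * (\<Sum>b\<in>V0. cmod (v b)))"
  proof (intro exI[of _ d] conjI allI impI d)
    fix v assume "(\<forall>b. b \<notin> V0 \<longrightarrow> v b = 0) \<and> (\<Sum>b\<in>V0. cmod (v b)) < d"
    then have "Nv v < d" by (simp add: Nv_sum)
    then have B: "cmod (f1 v) \<le> e * Nv v" "cmod (f2 v) \<le> e * Nv v" "cmod (f3 v) \<le> e * Nv v" "cmod (f4 v) \<le> e * Nv v" "cmod (f5 v) \<le> e * Nv v"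
      using dv by blast+
    show "\<forall>a\<in>V0. cmod (Phi (\<lambda>b. x0 b + v b) a - Phi x0 a - (\<Sum>b\<in>V0. J a b * v b)) \<le> e * (\<Sum>b\<in>V0. cmod (v b))"
      unfolding Nv_sum[symmetric]
    proof (rule ballV0)
      show "cmod (Phi (\<lambda>b. x0 b + v b) (1,1) - Phi x0 (1,1) - (\<Sum>b\<in>V0. J (1,1) b * v b)) \<le> e * Nv v"
        using B(1) e11[of v] by (simp only: Dsum_sum)
      show "cmod (Phi (\<lambda>b. x0 b + v b) (1,2) - Phi x0 (1,2) - (\<Sum>b\<in>V0. J (1,2) b * v b)) \<le> e * Nv v"
        using B(2) e12[of v] by (simp only: Dsum_sum)
      show "cmod (Phi (\<lambda>b. x0 b + v b) (2,1) - Phi x0 (2,1) - (\<Sum>b\<in>V0. J (2,1) b * v b)) \<le> e * Nv v"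
        using B(3) e21[of v] by (simp only: Dsum_sum)
      show "cmod (Phi (\<lambda>b. x0 b + v b) (2,2) - Phi x0 (2,2) - (\<Sum>b\<in>V0. J (2,2) b * v b)) \<le> e * Nv v"
        using B(4) e22[of v] by (simp only: Dsum_sum)
      show "cmod (Phi (\<lambda>b. x0 b + v b) (3,1) - Phi x0 (3,1) - (\<Sum>b\<in>V0. J (3,1) b * v b)) \<le> e * Nv v"
        using B(5) e31[of v] by (simp only: Dsum_sum)
    qed
  qed
qed

lemma jac:
  assumes n: "n = (\<lambda>k. if k = 1 \<or> k = 2 then 2 else 1)"
    and x0: "x0 (1,1) = L1c" "x0 (1,2) = U1c" "x0 (2,1) = L2c" "x0 (2,2) = U2c" "x0 (3,1) = L3c"
  shows "has_jacobian_at (cfg_map 3 n base) V0 x0 (Jg L1c U1c L2c U2c L3c)"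
proof -
  have nz_l1: "L1c \<noteq> 0" by (simp add: Lc_defs Q_add Q_diff Q_eq_0)
  have nz_l1u1: "L1c + U1c \<noteq> 0" by (simp add: Lc_defs Q_add Q_diff Q_eq_0)
  have nz_u1: "U1c \<noteq> 0" by (simp add: Lc_defs Q_add Q_diff Q_eq_0)
  have nz_u1l2: "U1c - L2c \<noteq> 0" by (simp add: Lc_defs Q_add Q_diff Q_eq_0)
  have nz_u1l2u2: "U1c - L2c - U2c \<noteq> 0" by (simp add: Lc_defs Q_add Q_diff Q_eq_0)
  have nz_l2: "L2c \<noteq> 0" by (simp add: Lc_defs Q_add Q_diff Q_eq_0)
  have nz_l2u1: "L2c - U1c \<noteq> 0" by (simp add: Lc_defs Q_add Q_diff Q_eq_0)
  have nz_l2u2: "L2c + U2c \<noteq> 0" by (simp add: Lc_defs Q_add Q_diff Q_eq_0)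
  have nz_l2u2u1: "L2c + U2c - U1c \<noteq> 0" by (simp add: Lc_defs Q_add Q_diff Q_eq_0)
  have nz_u2: "U2c \<noteq> 0" by (simp add: Lc_defs Q_add Q_diff Q_eq_0)
  have nz_u2l3: "U2c - L3c \<noteq> 0" by (simp add: Lc_defs Q_add Q_diff Q_eq_0)
  have nz_l3: "L3c \<noteq> 0" by (simp add: Lc_defs Q_add Q_diff Q_eq_0)
  have nz_l3u2: "L3c - U2c \<noteq> 0" by (simp add: Lc_defs Q_add Q_diff Q_eq_0)
  note S11 = comp11[of L1c U1c L2c U2c L3c, OF nz_l1 nz_l1u1]
  note S12 = comp12[of U1c L2c U2c L1c L3c, OF nz_u1 nz_u1l2 nz_u1l2u2 nz_l1u1]
  note S21 = comp21[of L2c U1c U2c L1c L3c, OF nz_l2 nz_l2u1 nz_l2u2 nz_l2u2u1]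
  note S22 = comp22[of U2c L3c L2c U1c L1c, OF nz_u2 nz_u2l3 nz_l2u2 nz_l2u2u1]
  note S31 = comp31[of L3c U2c L1c U1c L2c, OF nz_l3 nz_l3u2]
  show ?thesis
    by (rule small_jac[OF _ _ _ _ _ S11 S12 S21 S22 S31]) (simp_all only: map_eval[OF n] x0)
qed

lemma inv_bij:
  fixes J K :: "nat\<times>nat \<Rightarrow> nat\<times>nat \<Rightarrow> complex"
  assumes fin: "finite V"
    and JK: "\<And>a c. a \<in> V \<Longrightarrow> c \<in> V \<Longrightarrow> (\<Sum>b\<in>V. J a b * K b c) = (if a = c then 1 else 0)"
    and KJ: "\<And>a c. a \<in> V \<Longrightarrow> c \<in> V \<Longrightarrow> (\<Sum>b\<in>V. K a b * J b c) = (if a = c then 1 else 0)"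
  shows "bij_betw (\<lambda>v a. if a \<in> V then (\<Sum>b\<in>V. J a b * v b) else 0)
           {v. \<forall>b. b \<notin> V \<longrightarrow> v b = 0} {v. \<forall>b. b \<notin> V \<longrightarrow> v b = 0}"
proof -
  have key: "(\<Sum>b\<in>V. A a b * (if b \<in> V then \<Sum>c\<in>V. B b c * y c else 0)) = y a"
    if a: "a \<in> V" and AB: "\<And>a c. a \<in> V \<Longrightarrow> c \<in> V \<Longrightarrow> (\<Sum>b\<in>V. A a b * B b c) = (if a = c then 1 else 0)"
    for A B :: "nat\<times>nat \<Rightarrow> nat\<times>nat \<Rightarrow> complex" and y a
  proof -
    have "(\<Sum>b\<in>V. A a b * (if b \<in> V then \<Sum>c\<in>V. B b c * y c else 0)) = (\<Sum>b\<in>V. \<Sum>c\<in>V. A a b * B b c * y c)"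
      by (rule sum.cong) (auto simp: sum_distrib_left mult.assoc)
    also have "\<dots> = (\<Sum>c\<in>V. \<Sum>b\<in>V. A a b * B b c * y c)" by (rule sum.swap)
    also have "\<dots> = (\<Sum>c\<in>V. (\<Sum>b\<in>V. A a b * B b c) * y c)" by (simp add: sum_distrib_right)
    also have "\<dots> = (\<Sum>c\<in>V. (if a = c then y c else 0))"
      by (rule sum.cong) (auto simp: AB a)
    also have "\<dots> = y a" using a fin by simp
    finally show ?thesis .
  qed
  show ?thesis
  proof (rule bij_betw_byWitness[where f'="\<lambda>v a. if a \<in> V then (\<Sum>b\<in>V. K a b * v b) else 0"])
    show "\<forall>v\<in>{v. \<forall>b. b \<notin> V \<longrightarrow> v b = 0}. (\<lambda>a. if a \<in> V then \<Sum>b\<in>V. K a b * (if b \<in> V then \<Sum>c\<in>V. J b c * v c else 0) else 0) = v"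
      using key[OF _ KJ] by (auto intro!: ext)
    show "\<forall>v\<in>{v. \<forall>b. b \<notin> V \<longrightarrow> v b = 0}. (\<lambda>a. if a \<in> V then \<Sum>b\<in>V. J a b * (if b \<in> V then \<Sum>c\<in>V. K b c * v c else 0) else 0) = v"
      using key[OF _ JK] by (auto intro!: ext)
  qed auto
qed

lemma V0_finite: "finite V0" by (simp add: V0_def)

theorem proposition3p4:
  fixes n :: "nat \<Rightarrow> nat" and p :: "nat \<Rightarrow> nat \<Rightarrow> complex"
  assumes "n = (\<lambda>k. if k = 1 \<or> k = 2 then 2 else 1)"
    and "p = (\<lambda>k i.
           if k = 0 then 0
           else if k = 1 then (if i = 1 then - complex_of_real (sqrt 2 / 2) + \<i> else complex_of_real (sqrt 2 / 2) + \<i>)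
           else if k = 2 then (if i = 1 then - complex_of_real (sqrt 2 / 2) + 2 * \<i> else complex_of_real (sqrt 2 / 2) + 2 * \<i>)
           else 3 * \<i>)"
  shows "balanced 3 n p \<and> nondegenerate 3 n p \<and> residual_force 3 n p = 2 / (3 * \<i>)"
proof -
  note n = assms(1)
  have nv: "n 0 = 1" "n 1 = 2" "n 2 = 2" "n 3 = 1" "n (Suc 0) = 2" by (simp_all add: n)
  have cv: "cfg_c n 0 = 1" "cfg_c n 1 = 1/2" "cfg_c n 2 = 1/2" "cfg_c n 3 = 1" "cfg_c n (Suc 0) = 1/2"
    by (simp_all add: cfg_c_def nv)
  have pv: "p 0 1 = Q 0 0 0 0" "p 1 1 = Q 0 (-1/2) 1 0" "p 1 2 = Q 0 (1/2) 1 0"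
    "p 2 1 = Q 0 (-1/2) 2 0" "p 2 2 = Q 0 (1/2) 2 0" "p 3 1 = Q 0 0 3 0"
    by (simp_all add: assms(2) qsimps)
  have pv': "p 0 (Suc 0) = Q 0 0 0 0" "p (Suc 0) (Suc 0) = Q 0 (-1/2) 1 0" "p (Suc 0) 2 = Q 0 (1/2) 1 0"
    "p 2 (Suc 0) = Q 0 (-1/2) 2 0" "p 3 (Suc 0) = Q 0 0 3 0"
    using pv by simp_all
  have V: "cfg_V 3 n = V0"
    unfolding cfg_V_def V0_def using nv by (auto simp: le_Suc_eq numeral_3_eq_3 numeral_2_eq_2)
  have x0: "cfg_coords p (1,1) = L1c" "cfg_coords p (1,2) = U1c" "cfg_coords p (2,1) = L2c"
    "cfg_coords p (2,2) = U2c" "cfg_coords p (3,1) = L3c"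
    by (simp_all add: cfg_coords_def pv pv' Lc_defs qsimps)
  have Jv: "Jg L1c U1c L2c U2c L3c = Jn" unfolding Lc_defs by (rule Jg_val)
  have HJ: "has_jacobian_at (cfg_map 3 n (p 0 1)) (cfg_V 3 n) (cfg_coords p) Jn"
    using jac[OF n x0] unfolding V Jv .
  have BJ: "bij_betw (\<lambda>v a. if a \<in> cfg_V 3 n then (\<Sum>b\<in>cfg_V 3 n. Jn a b * v b) else 0)
        {v. \<forall>b. b \<notin> cfg_V 3 n \<longrightarrow> v b = 0} {v. \<forall>b. b \<notin> cfg_V 3 n \<longrightarrow> v b = 0}"
    unfolding V by (rule inv_bij[OF V0_finite JK KJ])
  have ND: "nondegenerate 3 n p" unfolding nondegenerate_def using HJ BJ by blast
  have F11: "cfg_F 3 n p 1 1 = 0"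
    apply (simp add: cfg_F_def nv ivl1 ivl2 ivl3 sdiff s2n)
    apply (simp only: cv pv pv')
    apply (simp add: qsimps)
    done
  have F12: "cfg_F 3 n p 1 2 = 0"
    apply (simp add: cfg_F_def nv ivl1 ivl2 ivl3 sdiff s2n)
    apply (simp only: cv pv pv')
    apply (simp add: qsimps)
    done
  have F21: "cfg_F 3 n p 2 1 = 0"
    apply (simp add: cfg_F_def nv ivl1 ivl2 ivl3 sdiff s2n)
    apply (simp only: cv pv pv')
    apply (simp add: qsimps)
    done
  have F22: "cfg_F 3 n p 2 2 = 0"
    apply (simp add: cfg_F_def nv ivl1 ivl2 ivl3 sdiff s2n)
    apply (simp only: cv pv pv')
    apply (simp add: qsimps)
    done
  have R: "residual_force 3 n p = 2 / (3 * \<i>)"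
    unfolding residual_force_def
    apply (simp add: cfg_F_def nv ivl1 ivl2 ivl3 sdiff s2n)
    apply (simp only: cv pv pv')
    apply (simp add: qsimps)
    done
  have BAL: "balanced 3 n p"
    unfolding balanced_def
  proof (intro ballI)
    fix k i assume k: "k \<in> {1..3-1}" and i: "i \<in> {1..n k}"
    from k have "k = 1 \<or> k = 2" by auto
    then show "cfg_F 3 n p k i = 0"
    proof
      assume "k = 1"
      then have "i = 1 \<or> i = 2" using i nv by auto
      then show ?thesis using F11 F12 \<open>k = 1\<close> by auto
    next
      assume "k = 2"
      then have "i = 1 \<or> i = 2" using i nv by auto
      then show ?thesis using F21 F22 \<open>k = 2\<close> by auto
    qed
  qed
  show ?thesis using BAL ND R by blast
qed

end
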